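(* Let $0<x_{\rm B}<x_{\rm A}$ and $v_E=\sqrt{2/x_{\rm A}}$. The function $T_D^R:\,]-\infty,v_E[\,\to\,]0,\infty[$ is strictly convex, with ${\rm d}^2T_D^R/{\rm d}v_{\rm A}^2>0$ everywhere.
   Context: Kepler problem on a line normalized as $\ddot x=-1/x^2$ ($x>0$), center ${\rm O}$ at $x=0$. For $v_{\rm A}<v_E$, $T_D^R(v_{\rm A})$ is the first time after $t_{\rm A}$ (minus $t_{\rm A}$) at which the solution with $x(t_{\rm A})=x_{\rm A}$, $\dot x(t_{\rm A})=v_{\rm A}$ reaches $x_{\rm B}$; this happens without collision with ${\rm O}$, possibly after a culmination (maximum of $x$) when $v_{\rm A}\ge0$. These are exactly the direct (collision-free) Keplerian arcs from ${\rm A}$ to ${\rm B}$. *)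

theory Defs
  imports "HOL-Analysis.Analysis"
begin

text \<open>Direct (collision-free) Keplerian arc for the normalized problem
  x'' = -1/x^2 on the half-line x > 0: starting at time tA from position xA with
  velocity vA, the solution reaches xB for the first time at time tA + T.\<close>
definition kepler_direct_arc :: "real \<Rightarrow> real \<Rightarrow> real \<Rightarrow> real \<Rightarrow> real \<Rightarrow> bool" where
  "kepler_direct_arc xA xB tA vA T \<longleftrightarrow> T > 0 \<and>
     (\<exists>x v :: real \<Rightarrow> real.
        x tA = xA \<and> v tA = vA \<and> x (tA + T) = xB \<and>
        (\<forall>t\<in>{tA..tA+T}. x t > 0 \<and>
            (x has_real_derivative v t) (at t within {tA..tA+T}) \<and>
            (v has_real_derivative (- 1 / (x t)^2)) (at t within {tA..tA+T})) \<and>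
        (\<forall>t\<in>{tA..<tA+T}. x t \<noteq> xB))"

definition T_DR :: "real \<Rightarrow> real \<Rightarrow> real \<Rightarrow> real \<Rightarrow> real" where
  "T_DR xA xB tA vA = (THE T. kepler_direct_arc xA xB tA vA T)"

definition strictly_convex_on :: "real set \<Rightarrow> (real \<Rightarrow> real) \<Rightarrow> bool" where
  "strictly_convex_on S f \<longleftrightarrow>
     (\<forall>x\<in>S. \<forall>y\<in>S. x \<noteq> y \<longrightarrow> (\<forall>u::real. 0 < u \<and> u < 1 \<longrightarrow>
        f ((1 - u) * x + u * y) < (1 - u) * f x + u * f y))"

end

theory Submission
  imports Defs
begin


lemma inv_sq_lip:
  fixes y z lo hi :: real
  assumes "lo > 0" "lo \<le> y" "y \<le> hi" "lo \<le> z" "z \<le> hi"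
  shows "\<bar>1/z^2 - 1/y^2\<bar> \<le> (2*hi/lo^4) * \<bar>y - z\<bar>"
proof -
  have yz: "y > 0" "z > 0" using assms by auto
  have eq: "1/z^2 - 1/y^2 = (y - z) * ((y + z) / (y^2 * z^2))"
    using yz by (simp add: field_simps power2_eq_square)
  have "(y + z) / (y^2 * z^2) \<le> (2*hi) / (lo^4)"
  proof (rule frac_le)
    show "0 \<le> 2*hi" using assms by auto
    show "y + z \<le> 2*hi" using assms by auto
    show "0 < lo^4" using assms by auto
    have "lo^2 \<le> y^2" "lo^2 \<le> z^2" using assms by (auto intro: power_mono)
    then have "lo^2 * lo^2 \<le> y^2 * z^2" by (intro mult_mono) auto
    then show "lo^4 \<le> y^2 * z^2" by (simp add: power_def)
  qed
  moreover have "(y + z) / (y^2 * z^2) \<ge> 0" using yz by auto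
  ultimately show ?thesis unfolding eq abs_mult
    by (metis abs_ge_zero abs_of_nonneg mult.commute mult_right_mono)
qed

lemma ode_unique:
  fixes x1 v1 x2 v2 :: "real \<Rightarrow> real"
  assumes t01: "t0 \<le> t1"
  and h1: "\<forall>t\<in>{t0..t1}. x1 t > 0 \<and> (x1 has_real_derivative v1 t) (at t within {t0..t1}) \<and>
            (v1 has_real_derivative (- 1 / (x1 t)^2)) (at t within {t0..t1})"
  and h2: "\<forall>t\<in>{t0..t1}. x2 t > 0 \<and> (x2 has_real_derivative v2 t) (at t within {t0..t1}) \<and>
            (v2 has_real_derivative (- 1 / (x2 t)^2)) (at t within {t0..t1})"
  and i1: "x1 t0 = x2 t0" and i2: "v1 t0 = v2 t0"
  shows "\<forall>t\<in>{t0..t1}. x1 t = x2 t"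
proof -
  let ?K = "{t0..t1}"
  have c1: "continuous_on ?K x1" using h1 by (intro DERIV_continuous_on) blast
  have c2: "continuous_on ?K x2" using h2 by (intro DERIV_continuous_on) blast
  have cv1: "continuous_on ?K v1" using h1 by (intro DERIV_continuous_on) blast
  have cv2: "continuous_on ?K v2" using h2 by (intro DERIV_continuous_on) blast
  have ne: "?K \<noteq> {}" using t01 by auto
  obtain a1 where a1: "a1 \<in> ?K" "\<forall>y\<in>?K. x1 a1 \<le> x1 y"
    using continuous_attains_inf[OF compact_Icc ne c1] by blast
  obtain a2 where a2: "a2 \<in> ?K" "\<forall>y\<in>?K. x2 a2 \<le> x2 y"
    using continuous_attains_inf[OF compact_Icc ne c2] by blast
  obtain b1 where b1: "b1 \<in> ?K" "\<forall>y\<in>?K. x1 y \<le> x1 b1"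
    using continuous_attains_sup[OF compact_Icc ne c1] by blast
  obtain b2 where b2: "b2 \<in> ?K" "\<forall>y\<in>?K. x2 y \<le> x2 b2"
    using continuous_attains_sup[OF compact_Icc ne c2] by blast
  define lo where "lo = min (x1 a1) (x2 a2)"
  define hi where "hi = max (x1 b1) (x2 b2)"
  have lo: "lo > 0" using a1 a2 h1 h2 unfolding lo_def by auto
  have bnd: "\<And>t. t \<in> ?K \<Longrightarrow> lo \<le> x1 t \<and> x1 t \<le> hi \<and> lo \<le> x2 t \<and> x2 t \<le> hi"
    using a1 a2 b1 b2 unfolding lo_def hi_def by fastforce
  define L where "L = 2*hi/lo^4"
  have L0: "L \<ge> 0" using lo bnd[of t0] t01 unfolding L_def by auto
  define k where "k = 1 + L"
  define e where "e t = (x1 t - x2 t)^2 + (v1 t - v2 t)^2" for t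
  define e' where "e' t = 2*(x1 t - x2 t)*(v1 t - v2 t) + 2*(v1 t - v2 t)*((- 1 / (x1 t)^2) - (- 1 / (x2 t)^2))" for t
  have de: "(e has_real_derivative e' t) (at t within ?K)" if "t \<in> ?K" for t
    unfolding e_def e'_def using h1 h2 that
    by (auto intro!: derivative_eq_intros simp: algebra_simps diff_divide_distrib add_divide_distrib)
  have e'le: "e' t \<le> k * e t" if "t \<in> ?K" for t
  proof -
    define p where "p = x1 t - x2 t"
    define q where "q = v1 t - v2 t"
    define r where "r = (- 1 / (x1 t)^2) - (- 1 / (x2 t)^2)"
    have r: "\<bar>r\<bar> \<le> L * \<bar>p\<bar>"
      using inv_sq_lip[OF lo, of "x1 t" hi "x2 t"] bnd[OF that] unfolding r_def p_def L_def
      by simp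
    have "2*p*q \<le> p^2 + q^2" by (simp add: sum_squares_bound)
    moreover have "2*q*r \<le> L*(p^2+q^2)"
    proof -
      have "2*q*r \<le> 2*\<bar>q\<bar>*\<bar>r\<bar>" by (simp add: abs_mult[symmetric])
      also have "\<dots> \<le> 2*\<bar>q\<bar>*(L*\<bar>p\<bar>)" using r by (simp add: mult_left_mono)
      also have "\<dots> = L*(2*\<bar>p\<bar>*\<bar>q\<bar>)" by simp
      also have "\<dots> \<le> L*(p^2+q^2)"
      proof -
        have "2*\<bar>p\<bar>*\<bar>q\<bar> \<le> \<bar>p\<bar>^2 + \<bar>q\<bar>^2" by (rule sum_squares_bound)
        then show ?thesis using L0 by (simp add: mult_left_mono)
      qed
      finally show ?thesis .
    qed
    ultimately show ?thesis unfolding e'_def e_def k_def p_def[symmetric] q_def[symmetric] r_def[symmetric]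
      by (simp add: algebra_simps)
  qed
  define f where "f t = e t * exp (- k * (t - t0))" for t
  have df: "(f has_real_derivative (e' t - k * e t) * exp (- k * (t - t0))) (at t within ?K)" if "t \<in> ?K" for t
    unfolding f_def using de[OF that]
    by (auto intro!: derivative_eq_intros simp: algebra_simps)
  have f0: "f t0 = 0" unfolding f_def e_def using i1 i2 by simp
  have fge: "f t \<ge> 0" for t unfolding f_def e_def by simp
  show ?thesis
  proof
    fix t assume t: "t \<in> ?K"
    have "f t \<le> 0"
    proof (cases "t = t0")
      case True then show ?thesis using f0 by simp
    next
      case False
      then have tt: "t0 < t" using t by auto
      have cf: "continuous_on {t0..t} f"
      proof (rule DERIV_continuous_on)
        fix s assume s: "s \<in> {t0..t}"
        show "(f has_real_derivative (e' s - k * e s) * exp (- k * (s - t0))) (at s within {t0..t})"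
          by (rule DERIV_subset[OF df]) (use s t in auto)
      qed
      have dz: "\<And>z. t0 < z \<Longrightarrow> z < t \<Longrightarrow> (f has_real_derivative (e' z - k * e z) * exp (- k * (z - t0))) (at z)"
      proof -
        fix z assume "t0 < z" "z < t"
        then have "z \<in> ?K" "at z within ?K = at z" using t by (auto intro!: at_within_Icc_at)
        then show "(f has_real_derivative (e' z - k * e z) * exp (- k * (z - t0))) (at z)"
          using df by metis
      qed
      obtain l z where z: "t0 < z" "z < t" "DERIV f z :> l" "f t - f t0 = (t - t0) * l"
        using MVT[OF tt cf] dz by (meson real_differentiable_def)
      have "l = (e' z - k * e z) * exp (- k * (z - t0))"
        using DERIV_unique[OF z(3) dz[OF z(1,2)]] .
      moreover have "e' z - k * e z \<le> 0" using e'le[of z] z t by auto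
      ultimately have "l \<le> 0" by (simp add: mult_nonpos_nonneg)
      then show ?thesis using z(4) f0 tt by (simp add: mult_nonneg_nonpos)
    qed
    then have "f t = 0" using fge[of t] by simp
    then have "e t = 0" unfolding f_def by simp
    then show "x1 t = x2 t" unfolding e_def
      by (metis add_nonneg_eq_0_iff eq_iff_diff_eq_0 power_eq_0_iff zero_le_power2)
  qed
qed



definition Dq :: "real \<Rightarrow> real \<Rightarrow> real \<Rightarrow> real \<Rightarrow> real" where
  "Dq c d m y = c + d * y - m^2 * y * (1 - y)"

definition gi :: "real \<Rightarrow> real \<Rightarrow> real \<Rightarrow> real \<Rightarrow> real" where
  "gi c d m y = 4 * m / (Dq c d m y)^2"

definition HH :: "real \<Rightarrow> real \<Rightarrow> real \<Rightarrow> real" where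
  "HH c d m = integral {0..1} (gi c d m)"

lemma Dq_alt:
  assumes "m^2 - 2*a*m = d"
  shows "Dq c d m s = (a - m* s)^2 + c - a^2"
proof -
  have dd: "d = m^2 - 2*a*m" using assms by simp
  show ?thesis by (simp only: Dq_def dd) (simp add: algebra_simps power2_eq_square)
qed

lemma Dq_pos:
  assumes "m^2 - 2*a*m = d" "m > 0" "c > 0" "a^2 < c \<or> a < 0" "s \<ge> 0"
  shows "Dq c d m s > 0"
proof (cases "a < 0")
  case True
  then have "a - m* s \<le> a" using assms by auto
  then have "(a - m* s)^2 \<ge> a^2" using True
    by (metis abs_le_square_iff abs_of_neg le_minus_iff linorder_not_le neg_0_le_iff_le order.trans abs_ge_minus_self)
  then show ?thesis using Dq_alt[OF assms(1)] assms by simp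
next
  case False
  then show ?thesis using Dq_alt[OF assms(1)] assms
    by (smt (verit) zero_le_power2)
qed

lemma aux1:
  fixes D m d a y :: real
  assumes "D \<noteq> 0" "m \<noteq> 0" "d = m^2 - 2*a*m"
  shows "- 2 * (d - m^2*(1 - 2 * y)) * inverse (4*m / D^2) / D^2 = a - m * y"
proof -
  have "inverse (4*m / D^2) / D^2 = 1/(4*m)" using assms by (simp add: field_simps)
  then have "- 2 * (d - m^2*(1 - 2 * y)) * inverse (4*m / D^2) / D^2 = - 2 * (d - m^2*(1 - 2 * y)) / (4*m)"
    by (metis (no_types, lifting) times_divide_eq_right mult.right_neutral divide_divide_eq_left' )
  also have "\<dots> = a - m * y" using assms(2) unfolding assms(3)
    by (simp add: field_simps power2_eq_square)
  finally show ?thesis .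
qed

lemma arc_exists:
  fixes c d a m tA :: real
  assumes c: "c > 0" and d: "d > 0" and a: "a < sqrt c"
    and m: "m = a + sqrt (a^2 + d)"
  shows "kepler_direct_arc (2/c) (2/(c+d)) tA a (HH c d m)"
proof -
  have sq: "sqrt (a^2+d) > \<bar>a\<bar>"
    using d by (metis abs_less_iff add.commute less_add_same_cancel2 real_sqrt_abs real_sqrt_less_iff)
  have m0: "m > 0" using sq m by auto
  have md: "m^2 - 2*a*m = d"
  proof -
    have "(sqrt (a^2+d))^2 = a^2 + d" using d by simp
    then show ?thesis unfolding m by (simp add: algebra_simps power2_eq_square)
  qed
  have ac: "a^2 < c \<or> a < 0"
  proof (cases "a < 0")
    case False
    then have "a^2 < (sqrt c)^2" using a by (intro power_strict_mono) auto
    then show ?thesis using c by simp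
  qed simp
  let ?D = "Dq c d m"
  have Dp: "\<And>s. s \<ge> 0 \<Longrightarrow> ?D s > 0" using Dq_pos[OF md m0 c ac] by blast
  define G where "G s = gi c d m (max 0 s)" for s
  have Gp: "G s > 0" for s unfolding G_def gi_def using Dp[of "max 0 s"] m0 by auto
  have cD: "continuous_on UNIV (\<lambda>s. Dq c d m (max 0 s))" unfolding Dq_def
    by (intro continuous_intros)
  have nz: "\<forall>s\<in>UNIV. (Dq c d m (max 0 s))^2 \<noteq> 0"
  proof
    fix s :: real
    have "Dq c d m (max 0 s) > 0" by (rule Dp) simp
    then show "(Dq c d m (max 0 s))^2 \<noteq> 0" by simp
  qed
  have Gc: "continuous_on UNIV G"
    unfolding G_def gi_def
    by (intro continuous_on_divide continuous_intros cD nz)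
  have Gint: "G integrable_on {p..q}" for p q
    by (rule integrable_continuous_real) (use Gc continuous_on_subset in blast)
  define tau where "tau s = integral {-1..s} G - integral {-1..0} G" for s
  have dtau: "(tau has_real_derivative G s) (at s)" if "s > -1" for s
  proof -
    have "((\<lambda>x. integral {-1..x} G) has_real_derivative G s) (at s within {-1..s+1})"
      by (rule integral_has_real_derivative) (use Gc continuous_on_subset that in auto)
    moreover have "at s within {-1..s+1} = at s" using that by (intro at_within_Icc_at) auto
    ultimately have "((\<lambda>x. integral {-1..x} G) has_real_derivative G s) (at s)" by simp
    then show ?thesis unfolding tau_def by (auto intro!: derivative_eq_intros)
  qed
  have tau_mono: "tau p < tau q" if "-1 < p" "p < q" for p q
  proof (rule DERIV_pos_imp_increasing[OF that(2)])
    fix y assume "p \<le> y" "y \<le> q"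
    then show "\<exists>z. DERIV tau y :> z \<and> z > 0" using dtau[of y] Gp[of y] that by auto
  qed
  have tau_mono_le: "tau p \<le> tau q \<longleftrightarrow> p \<le> q" if "-1 < p" "-1 < q" for p q
    using tau_mono[of p q] tau_mono[of q p] that by (cases p q rule: linorder_cases) auto
  have tau_cont: "continuous_on {p..q} tau" if "-1 < p" for p q
    using dtau that by (intro DERIV_continuous_on[of _ _ G]) (auto intro: has_field_derivative_at_within)
  have tau0: "tau 0 = 0" unfolding tau_def by simp
  have tau1: "tau 1 = HH c d m"
  proof -
    have "integral {-1..0} G + integral {0..1} G = integral {-1..1} G"
      by (rule Henstock_Kurzweil_Integration.integral_combine) (auto intro: Gint)
    moreover have "integral {0..1} G = HH c d m"
      unfolding HH_def G_def by (intro integral_cong) auto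
    ultimately show ?thesis unfolding tau_def by simp
  qed
  define J where "J = {-1/2..2::real}"
  define sg where "sg = inv_into J tau"
  have sg_tau: "sg (tau s) = s" if "s \<in> J" for s
  proof -
    have "inj_on tau J"
    proof (rule inj_onI)
      fix p q assume "p \<in> J" "q \<in> J" "tau p = tau q"
      then show "p = q" using tau_mono[of p q] tau_mono[of q p] unfolding J_def
        by (cases p q rule: linorder_cases) auto
    qed
    then show ?thesis unfolding sg_def using that by (rule inv_into_f_f)
  qed
  have surj: "t \<in> tau ` J" if hh: "tau (-1/2) \<le> t" "t \<le> tau 2" for t
  proof -
    obtain s where "-1/2 \<le> s" "s \<le> 2" "tau s = t"
      using IVT'[of tau "-1/2" t 2] hh tau_cont[of "-1/2" 2] by auto
    then show ?thesis unfolding J_def by force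
  qed
  have tau_sg: "tau (sg t) = t" "sg t \<in> J" if "tau (-1/2) \<le> t" "t \<le> tau 2" for t
    using surj[OF that] sg_tau by (auto simp: J_def)
  have sg_cont: "continuous_on (tau ` J) sg"
    unfolding sg_def by (rule continuous_on_inv) (use tau_cont sg_tau sg_def J_def in auto)
  have dsg: "(sg has_real_derivative inverse (G (sg t))) (at t)"
    if "tau (-1/2) < t" "t < tau 2" for t
  proof (rule DERIV_inverse_function[where f=tau and a="tau (-1/2)" and b="tau 2"])
    show "DERIV tau (sg t) :> G (sg t)" using dtau tau_sg[of t] that by (auto simp: J_def)
    show "G (sg t) \<noteq> 0" using Gp[of "sg t"] by simp
    show "\<And>y. tau (-1/2) < y \<Longrightarrow> y < tau 2 \<Longrightarrow> tau (sg y) = y" using tau_sg by auto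
    have "{tau (-1/2)<..<tau 2} \<subseteq> tau ` J" using surj by auto
    then have "continuous_on {tau (-1/2)<..<tau 2} sg" using sg_cont continuous_on_subset by blast
    then show "isCont sg t" using that by (simp add: continuous_on_eq_continuous_at)
  qed (use that in auto)
  define T where "T = HH c d m"
  have T0: "0 < T" using tau_mono[of 0 1] tau0 tau1 T_def by simp
  have Ti: "tau (-1/2) < 0" "T < tau 2" using tau_mono[of "-1/2" 0] tau_mono[of 1 2] tau0 tau1 T_def by auto
  define x where "x t = 2 / ?D (sg (t - tA))" for t
  define v where "v t = a - m * sg (t - tA)" for t
  have sgI: "0 \<le> sg (t - tA) \<and> sg (t - tA) \<le> 1" if "t \<in> {tA..tA+T}" for t
  proof -
    have "tau 0 \<le> tau (sg (t-tA))" "tau (sg (t-tA)) \<le> tau 1"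
      using tau_sg[of "t-tA"] that Ti tau0 tau1 T_def by auto
    moreover have "sg (t-tA) \<in> J" "tau (sg (t-tA)) = t - tA" using tau_sg[of "t-tA"] that Ti T_def by auto
    ultimately show ?thesis using tau_mono_le[of 0 "sg (t-tA)"] tau_mono_le[of "sg (t-tA)" 1]
      unfolding J_def by auto
  qed
  have s0: "sg 0 = 0" using sg_tau[of 0] tau0 by (simp add: J_def)
  have s1: "sg T = 1" using sg_tau[of 1] tau1 T_def by (simp add: J_def)
  have h0: "x tA = 2 / c" unfolding x_def by (simp add: Dq_def s0)
  have hv: "v tA = a" unfolding v_def by (simp add: s0)
  have hT: "x (tA + T) = 2 / (c + d)" unfolding x_def by (simp add: s1 Dq_def)
  have hall: "\<forall>t\<in>{tA..tA+T}. x t > 0 \<and> (x has_real_derivative v t) (at t within {tA..tA+T}) \<and>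
            (v has_real_derivative (- 1 / (x t)^2)) (at t within {tA..tA+T})"
  proof
    fix t assume t: "t \<in> {tA..tA+T}"
    let ?s = "sg (t - tA)"
    have sI: "0 \<le> ?s" "?s \<le> 1" using sgI[OF t] by auto
    have Dps: "?D ?s > 0" using Dp sI by auto
    have xp: "x t > 0" unfolding x_def using Dps by simp
    have ds: "((\<lambda>t. sg (t - tA)) has_real_derivative inverse (G ?s)) (at t)"
    proof -
      have q1: "DERIV sg (t - tA) :> inverse (G ?s)" by (rule dsg) (use t Ti in auto)
      have q2: "DERIV (\<lambda>t. t - tA) t :> 1" by (auto intro!: derivative_eq_intros)
      show ?thesis using DERIV_chain2[OF q1 q2] by simp
    qed
    have Gs: "G ?s = 4*m / (?D ?s)^2" unfolding G_def gi_def using sI by (simp add: max_def)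
    have dx: "(x has_real_derivative v t) (at t)"
    proof -
      have "(x has_real_derivative (- 2 * (d - m^2*(1 - 2 * ?s)) * inverse (G ?s) / (?D ?s)^2)) (at t)"
      proof -
        have dDq: "DERIV (Dq c d m) ?s :> (d - m^2*(1 - 2 * ?s))"
          unfolding Dq_def[abs_def] by (auto intro!: derivative_eq_intros simp: algebra_simps)
        have dD: "((\<lambda>t. Dq c d m (sg (t - tA))) has_real_derivative (d - m^2*(1 - 2 * ?s)) * inverse (G ?s)) (at t)"
          using DERIV_chain2[OF dDq ds] .
        have "((\<lambda>t. 2 / Dq c d m (sg (t - tA))) has_real_derivative
           (0 * Dq c d m ?s - 2 * ((d - m^2*(1 - 2 * ?s)) * inverse (G ?s))) / (Dq c d m ?s * Dq c d m ?s)) (at t)"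
          using DERIV_divide[OF DERIV_const dD] Dps by simp
        then show ?thesis unfolding x_def
          by (rule DERIV_cong) (simp add: power2_eq_square algebra_simps minus_divide_left[symmetric] diff_divide_distrib)
      qed
      moreover have "- 2 * (d - m^2*(1 - 2 * ?s)) * inverse (G ?s) / (?D ?s)^2 = v t"
        unfolding Gs v_def using Dps m0 md by (intro aux1) auto
      ultimately show ?thesis by simp
    qed
    have dv: "(v has_real_derivative (- 1 / (x t)^2)) (at t)"
    proof -
      have "(v has_real_derivative (- m * inverse (G ?s))) (at t)"
        unfolding v_def using ds by (auto intro!: derivative_eq_intros)
      moreover have "- m * inverse (G ?s) = - 1 / (x t)^2"
        unfolding Gs x_def using Dps m0 by (simp add: field_simps power2_eq_square)
      ultimately show ?thesis by simp
    qed
    show "x t > 0 \<and> (x has_real_derivative v t) (at t within {tA..tA+T}) \<and>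
            (v has_real_derivative (- 1 / (x t)^2)) (at t within {tA..tA+T})"
      using xp dx dv by (auto intro: has_field_derivative_at_within)
  qed
  have hne: "\<forall>t\<in>{tA..<tA+T}. x t \<noteq> 2 / (c + d)"
  proof
    fix t assume t: "t \<in> {tA..<tA+T}"
    let ?s = "sg (t - tA)"
    have sI: "0 \<le> ?s" "?s \<le> 1" using sgI[of t] t by auto
    have "?s \<noteq> 1"
    proof
      assume "?s = 1"
      then have "tau ?s = T" using tau1 T_def by simp
      moreover have "tau ?s = t - tA" using tau_sg[of "t - tA"] t Ti by auto
      ultimately show False using t by simp
    qed
    then have s1: "?s < 1" using sI by simp
    have Dps: "?D ?s > 0" using Dp sI by auto
    show "x t \<noteq> 2 / (c + d)"
    proof
      assume "x t = 2 / (c + d)"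
      then have "?D ?s = c + d" unfolding x_def using Dps c d by (auto simp: field_simps)
      then have "(?s - 1) * (d + m^2 * ?s) = 0" unfolding Dq_def by (simp add: algebra_simps)
      moreover have "d + m^2 * ?s > 0" using d sI m0 by (simp add: add_pos_nonneg)
      ultimately show False using s1 by simp
    qed
  qed
  show ?thesis unfolding kepler_direct_arc_def T_def[symmetric]
    using T0 h0 hv hT hall hne by blast
qed



lemma arc_lt:
  assumes a1: "kepler_direct_arc xA xB tA vA T1" and a2: "kepler_direct_arc xA xB tA vA T2"
    and lt: "T1 < T2"
  shows False
proof -
  obtain x1 v1 where h1: "T1 > 0" "x1 tA = xA" "v1 tA = vA" "x1 (tA + T1) = xB"
    "\<forall>t\<in>{tA..tA+T1}. x1 t > 0 \<and> (x1 has_real_derivative v1 t) (at t within {tA..tA+T1}) \<and>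
            (v1 has_real_derivative (- 1 / (x1 t)^2)) (at t within {tA..tA+T1})"
    using a1 unfolding kepler_direct_arc_def by blast
  obtain x2 v2 where h2: "T2 > 0" "x2 tA = xA" "v2 tA = vA" "x2 (tA + T2) = xB"
    "\<forall>t\<in>{tA..tA+T2}. x2 t > 0 \<and> (x2 has_real_derivative v2 t) (at t within {tA..tA+T2}) \<and>
            (v2 has_real_derivative (- 1 / (x2 t)^2)) (at t within {tA..tA+T2})"
    "\<forall>t\<in>{tA..<tA+T2}. x2 t \<noteq> xB"
    using a2 unfolding kepler_direct_arc_def by blast
  have sub: "{tA..tA+T1} \<subseteq> {tA..tA+T2}" using lt by auto
  have h2': "\<forall>t\<in>{tA..tA+T1}. x2 t > 0 \<and> (x2 has_real_derivative v2 t) (at t within {tA..tA+T1}) \<and>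
            (v2 has_real_derivative (- 1 / (x2 t)^2)) (at t within {tA..tA+T1})"
  proof
    fix t assume t: "t \<in> {tA..tA+T1}"
    then have "t \<in> {tA..tA+T2}" using sub by blast
    then show "x2 t > 0 \<and> (x2 has_real_derivative v2 t) (at t within {tA..tA+T1}) \<and>
            (v2 has_real_derivative (- 1 / (x2 t)^2)) (at t within {tA..tA+T1})"
      using h2(5) DERIV_subset[OF _ sub] by blast
  qed
  have "\<forall>t\<in>{tA..tA+T1}. x1 t = x2 t"
  proof (rule ode_unique[of tA "tA+T1" x1 v1 x2 v2])
    show "tA \<le> tA + T1" using h1 by simp
    show "\<forall>t\<in>{tA..tA+T1}. x1 t > 0 \<and> (x1 has_real_derivative v1 t) (at t within {tA..tA+T1}) \<and>
            (v1 has_real_derivative (- 1 / (x1 t)^2)) (at t within {tA..tA+T1})" by (rule h1(5))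
    show "\<forall>t\<in>{tA..tA+T1}. x2 t > 0 \<and> (x2 has_real_derivative v2 t) (at t within {tA..tA+T1}) \<and>
            (v2 has_real_derivative (- 1 / (x2 t)^2)) (at t within {tA..tA+T1})" by (rule h2')
    show "x1 tA = x2 tA" "v1 tA = v2 tA" using h1 h2 by auto
  qed
  then have "x2 (tA + T1) = xB" using h1 by auto
  moreover have "tA + T1 \<in> {tA..<tA+T2}" using h1 lt by auto
  ultimately show False using h2(6) by blast
qed

lemma arc_unique:
  assumes "kepler_direct_arc xA xB tA vA T1" "kepler_direct_arc xA xB tA vA T2"
  shows "T1 = T2"
  using arc_lt[OF assms(1,2)] arc_lt[OF assms(2,1)] by (cases T1 T2 rule: linorder_cases) auto

definition g1 :: "real \<Rightarrow> real \<Rightarrow> real \<Rightarrow> real \<Rightarrow> real" where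
  "g1 c d m y = 4 / (Dq c d m y)^2 + 16 * m^2 * (y * (1 - y)) / (Dq c d m y)^3"

definition g2 :: "real \<Rightarrow> real \<Rightarrow> real \<Rightarrow> real \<Rightarrow> real" where
  "g2 c d m y = 48 * m * (y * (1 - y)) / (Dq c d m y)^3 + 96 * m^3 * (y * (1 - y))^2 / (Dq c d m y)^4"

lemma Dq_posU:
  assumes c: "c > 0" and d: "d > 0" and m: "0 < m" "m < sqrt c + sqrt (c + d)" and y: "0 \<le> y" "y \<le> 1"
  shows "Dq c d m y > 0"
proof -
  define M where "M = sqrt c + sqrt (c + d)"
  have sc: "(sqrt c)^2 = c" "(sqrt (c+d))^2 = c + d" using c d by auto
  have eq: "Dq c d m y = (sqrt c - M * y)^2 + (M^2 - m^2) * (y * (1 - y))"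
    unfolding Dq_def M_def using sc by (simp add: algebra_simps power2_eq_square)
  have mM: "m^2 < M^2" using m unfolding M_def by (intro power_strict_mono) auto
  consider "y = 0" | "y = 1" | "0 < y \<and> y < 1" using y by linarith
  then show ?thesis
  proof cases
    case 1 then show ?thesis using c by (simp add: Dq_def)
  next
    case 2 then show ?thesis using c d by (simp add: Dq_def)
  next
    case 3
    then have "(M^2 - m^2) * (y * (1 - y)) > 0" using mM by simp
    then show ?thesis unfolding eq by (smt (verit) zero_le_power2)
  qed
qed

lemma Dq_le:
  assumes "d > 0" "0 \<le> y" "y \<le> 1"
  shows "Dq c d m y \<le> c + d"
proof -
  have "d * y \<le> d" using assms by (simp add: mult_left_le)
  moreover have "m^2 * y * (1 - y) \<ge> 0" using assms by simp
  ultimately show ?thesis unfolding Dq_def by linarith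
qed



lemma dDq: "((\<lambda>m. Dq c d m y) has_real_derivative (- 2 * m * (y * (1 - y)))) (at m)"
  unfolding Dq_def by (rule DERIV_cong, (rule derivative_eq_intros refl)+) (simp add: algebra_simps)

lemma dgi:
  assumes nz: "Dq c d m y \<noteq> 0"
  shows "((\<lambda>m. gi c d m y) has_real_derivative g1 c d m y) (at m)"
proof -
  note P2 = DERIV_power[OF dDq[of c d y m], where n=2]
  have N: "((\<lambda>m. 4 * m) has_real_derivative 4) (at m)" by (auto intro!: derivative_eq_intros)
  note Q = DERIV_divide[OF N P2]
  show ?thesis unfolding gi_def[abs_def]
    by (rule DERIV_cong[OF Q]) (use nz in \<open>simp_all add: g1_def field_simps power2_eq_square power3_eq_cube\<close>)
qed

lemma dg1:
  assumes nz: "Dq c d m y \<noteq> 0"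
  shows "((\<lambda>m. g1 c d m y) has_real_derivative g2 c d m y) (at m)"
proof -
  note P2 = DERIV_power[OF dDq[of c d y m], where n=2]
  note P3 = DERIV_power[OF dDq[of c d y m], where n=3]
  have N1: "((\<lambda>m. 4::real) has_real_derivative 0) (at m)" by (auto intro!: derivative_eq_intros)
  have N2: "((\<lambda>m. 16 * m^2 * (y * (1 - y))) has_real_derivative 32 * m * (y * (1 - y))) (at m)"
    by (rule DERIV_cong, (rule derivative_eq_intros refl)+) (simp add: algebra_simps)
  note Q1 = DERIV_divide[OF N1 P2]
  note Q2 = DERIV_divide[OF N2 P3]
  have z2: "(Dq c d m y)^2 \<noteq> 0" and z3: "(Dq c d m y)^3 \<noteq> 0" using nz by auto
  note Q = DERIV_add[OF Q1[OF z2] Q2[OF z3]]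
  show ?thesis unfolding g1_def[abs_def]
    by (rule DERIV_cong[OF Q]) (use nz in \<open>simp add: g2_def field_simps, algebra\<close>)
qed



lemma cDq2: "continuous_on S (\<lambda>p. Dq c d (fst p) (snd p))"
  unfolding Dq_def by (intro continuous_intros)

lemma cDq1: "continuous_on S (\<lambda>y. Dq c d m y)"
  unfolding Dq_def by (intro continuous_intros)

context
  fixes c d :: real
  assumes c: "c > 0" and d: "d > 0"
begin

definition "MM = sqrt c + sqrt (c + d)"

lemma MM_eq: "MM = sqrt c + sqrt (c + d)" by (simp add: MM_def)

lemma DqU: "m \<in> {0<..<MM} \<Longrightarrow> y \<in> {0..1} \<Longrightarrow> Dq c d m y > 0"
  using Dq_posU[OF c d] unfolding MM_def by auto

lemma nz1: "m \<in> {0<..<MM} \<Longrightarrow> \<forall>y\<in>{0..1}. (Dq c d m y)^n \<noteq> 0"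
  using DqU by (metis less_irrefl power_eq_0_iff)

lemma nz2: "\<forall>p\<in>{0<..<MM} \<times> cbox 0 1. (Dq c d (fst p) (snd p))^n \<noteq> 0"
proof
  fix p :: "real \<times> real" assume "p \<in> {0<..<MM} \<times> cbox 0 1"
  then have "Dq c d (fst p) (snd p) > 0" using DqU[of "fst p" "snd p"] by (auto simp: mem_Times_iff)
  then show "(Dq c d (fst p) (snd p))^n \<noteq> 0" by simp
qed

lemma int_gen:
  fixes f :: "real \<Rightarrow> real"
  assumes "continuous_on {0..1} f" shows "f integrable_on cbox 0 (1::real)"
  using integrable_continuous_real[OF assms] by simp

lemma gi_int: "m \<in> {0<..<MM} \<Longrightarrow> gi c d m integrable_on cbox 0 1"
  unfolding gi_def[abs_def]
  by (intro int_gen continuous_intros cDq1 nz1)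

lemma g1_int: "m \<in> {0<..<MM} \<Longrightarrow> g1 c d m integrable_on cbox 0 1"
  unfolding g1_def[abs_def]
  by (intro int_gen continuous_intros cDq1 nz1)

lemma g2_int: "m \<in> {0<..<MM} \<Longrightarrow> g2 c d m integrable_on cbox 0 1"
  unfolding g2_def[abs_def]
  by (intro int_gen continuous_intros cDq1 nz1)

lemma g1_cont: "continuous_on ({0<..<MM} \<times> cbox 0 1) (\<lambda>(x, t). g1 c d x t)"
  unfolding g1_def case_prod_beta'
  by (intro continuous_intros cDq2 nz2)

lemma g2_cont: "continuous_on ({0<..<MM} \<times> cbox 0 1) (\<lambda>(x, t). g2 c d x t)"
  unfolding g2_def case_prod_beta'
  by (intro continuous_intros cDq2 nz2)

lemma HH_deriv:
  assumes m: "m \<in> {0<..<MM}"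
  shows "(HH c d has_real_derivative integral {0..1} (g1 c d m)) (at m)"
proof -
  have "((\<lambda>m. integral (cbox 0 1) (gi c d m)) has_field_derivative integral (cbox 0 1) (g1 c d m)) (at m within {0<..<MM})"
  proof (rule leibniz_rule_field_derivative[OF _ gi_int g1_cont m])
    fix x t assume x: "x \<in> {0<..<MM}" and t: "(t::real) \<in> cbox 0 1"
    show "((\<lambda>x. gi c d x t) has_field_derivative g1 c d x t) (at x within {0<..<MM})"
      by (rule has_field_derivative_at_within[OF dgi]) (use DqU[OF x, of t] t in simp)
  qed (blast, rule convex_real_interval(8))
  moreover have "(\<lambda>m. integral (cbox 0 1) (gi c d m)) = HH c d"
    unfolding HH_def[abs_def] cbox_interval by (rule refl)
  moreover have "at m within {0<..<MM} = at m" by (rule at_within_open[OF m]) simp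
  ultimately show ?thesis by (simp only: cbox_interval)
qed

lemma H1_deriv:
  assumes m: "m \<in> {0<..<MM}"
  shows "((\<lambda>m. integral {0..1} (g1 c d m)) has_real_derivative integral {0..1} (g2 c d m)) (at m)"
proof -
  have "((\<lambda>m. integral (cbox 0 1) (g1 c d m)) has_field_derivative integral (cbox 0 1) (g2 c d m)) (at m within {0<..<MM})"
  proof (rule leibniz_rule_field_derivative[OF _ g1_int g2_cont m])
    fix x t assume x: "x \<in> {0<..<MM}" and t: "(t::real) \<in> cbox 0 1"
    show "((\<lambda>x. g1 c d x t) has_field_derivative g2 c d x t) (at x within {0<..<MM})"
      by (rule has_field_derivative_at_within[OF dg1]) (use DqU[OF x, of t] t in simp)
  qed (blast, rule convex_real_interval(8))
  moreover have "at m within {0<..<MM} = at m" by (rule at_within_open[OF m]) simp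
  ultimately show ?thesis by (simp only: cbox_interval)
qed

lemma H1_pos:
  assumes m: "m \<in> {0<..<MM}"
  shows "integral {0..1} (g1 c d m) > 0"
proof -
  have "integral {0..1} (\<lambda>y::real. 4 / (c+d)^2) \<le> integral {0..1} (g1 c d m)"
  proof (rule Henstock_Kurzweil_Integration.integral_le)
    show "(\<lambda>y::real. 4 / (c+d)^2) integrable_on {0..1}" by (intro integrable_continuous_real continuous_intros)
    show "g1 c d m integrable_on {0..1}" using g1_int[OF m] by simp
    fix y :: real assume y: "y \<in> {0..1}"
    have D0: "Dq c d m y > 0" using DqU[OF m y] .
    have "Dq c d m y \<le> c + d" using Dq_le[OF d] y by auto
    then have "(Dq c d m y)^2 \<le> (c+d)^2" using D0 by (intro power_mono) auto
    then have "4 / (c+d)^2 \<le> 4 / (Dq c d m y)^2" using D0 c d by (intro divide_left_mono) auto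
    moreover have "16 * m^2 * (y * (1 - y)) / (Dq c d m y)^3 \<ge> 0" using y D0 by auto
    ultimately show "4 / (c+d)^2 \<le> g1 c d m y" unfolding g1_def by linarith
  qed
  moreover have "integral {0..1} (\<lambda>y::real. 4 / (c+d)^2) > 0" using c d by simp
  ultimately show ?thesis by linarith
qed

lemma H2_nonneg:
  assumes m: "m \<in> {0<..<MM}"
  shows "integral {0..1} (g2 c d m) \<ge> 0"
proof (rule Henstock_Kurzweil_Integration.integral_nonneg)
  show "g2 c d m integrable_on {0..1}" using g2_int[OF m] by simp
  fix y :: real assume y: "y \<in> {0..1}"
  have D0: "Dq c d m y > 0" using DqU[OF m y] .
  then show "0 \<le> g2 c d m y" unfolding g2_def using m y by auto
qed

lemma HH_pos:
  assumes m: "m \<in> {0<..<MM}"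
  shows "HH c d m > 0"
proof -
  have "integral {0..1} (\<lambda>y::real. 4 * m / (c+d)^2) \<le> HH c d m" unfolding HH_def
  proof (rule Henstock_Kurzweil_Integration.integral_le)
    show "(\<lambda>y::real. 4 * m / (c+d)^2) integrable_on {0..1}" by (intro integrable_continuous_real continuous_intros)
    show "gi c d m integrable_on {0..1}" using gi_int[OF m] by simp
    fix y :: real assume y: "y \<in> {0..1}"
    have D0: "Dq c d m y > 0" using DqU[OF m y] .
    have "Dq c d m y \<le> c + d" using Dq_le[OF d] y by auto
    then have "(Dq c d m y)^2 \<le> (c+d)^2" using D0 by (intro power_mono) auto
    then show "4 * m / (c+d)^2 \<le> gi c d m y" unfolding gi_def using D0 m c d by (intro divide_left_mono) auto
  qed
  moreover have "integral {0..1} (\<lambda>y::real. 4 * m / (c+d)^2) > 0" using c d m by simp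
  ultimately show ?thesis by linarith
qed

end



definition mmf :: "real \<Rightarrow> real \<Rightarrow> real" where "mmf d a = a + sqrt (a^2 + d)"
definition mm1 :: "real \<Rightarrow> real \<Rightarrow> real" where "mm1 d a = 1 + a / sqrt (a^2 + d)"
definition mm2 :: "real \<Rightarrow> real \<Rightarrow> real" where "mm2 d a = d / ((a^2 + d) * sqrt (a^2 + d))"

lemma sq_gt: "d > 0 \<Longrightarrow> sqrt (a^2 + d) > \<bar>a\<bar>"
  by (metis abs_less_iff add.commute less_add_same_cancel2 real_sqrt_abs real_sqrt_less_iff)

lemma dmm:
  assumes d: "d > 0"
  shows "(mmf d has_real_derivative mm1 d a) (at a)"
proof -
  have s: "sqrt (a^2 + d) > 0" using sq_gt[OF d, of a] by linarith
  have "((\<lambda>a. a + sqrt (a^2 + d)) has_real_derivative 1 + inverse (sqrt (a^2 + d)) / 2 * (2 * a)) (at a)"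
    by (rule DERIV_cong, (rule derivative_eq_intros refl | use s in simp)+)
  then show ?thesis unfolding mmf_def[abs_def] mm1_def by (rule DERIV_cong) (simp add: field_simps)
qed

lemma dmm1:
  assumes d: "d > 0"
  shows "(mm1 d has_real_derivative mm2 d a) (at a)"
proof -
  have s: "sqrt (a^2 + d) > 0" using sq_gt[OF d, of a] by linarith
  have s2: "(sqrt (a^2 + d))^2 = a^2 + d" using d by (simp add: add_nonneg_pos)
  have ds: "((\<lambda>a. sqrt (a^2 + d)) has_real_derivative a / sqrt (a^2 + d)) (at a)"
  proof -
    have i: "((\<lambda>a. a^2 + d) has_real_derivative 2 * a) (at a)"
      by (rule DERIV_cong, (rule derivative_eq_intros refl)+) simp
    have r: "DERIV sqrt (a^2 + d) :> inverse (sqrt (a^2 + d)) / 2"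
      by (rule DERIV_real_sqrt) (use d in \<open>simp add: add_nonneg_pos\<close>)
    show ?thesis by (rule DERIV_cong[OF DERIV_chain2[OF r i]]) (simp add: field_simps)
  qed
  have q: "((\<lambda>a. a / sqrt (a^2 + d)) has_real_derivative
            (1 * sqrt (a^2 + d) - a * (a / sqrt (a^2 + d))) / (sqrt (a^2 + d) * sqrt (a^2 + d))) (at a)"
    by (rule DERIV_divide[OF DERIV_ident ds]) (use s in simp)
  have "((\<lambda>a. 1 + a / sqrt (a^2 + d)) has_real_derivative
            0 + (1 * sqrt (a^2 + d) - a * (a / sqrt (a^2 + d))) / (sqrt (a^2 + d) * sqrt (a^2 + d))) (at a)"
    by (rule DERIV_add[OF DERIV_const q])
  moreover have "0 + (1 * sqrt (a^2 + d) - a * (a / sqrt (a^2 + d))) / (sqrt (a^2 + d) * sqrt (a^2 + d)) = mm2 d a"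
  proof -
    have "(1 * sqrt (a^2 + d) - a * (a / sqrt (a^2 + d))) = ((sqrt (a^2+d))^2 - a^2) / sqrt (a^2 + d)"
      using s by (simp add: field_simps power2_eq_square)
    also have "\<dots> = d / sqrt (a^2 + d)" using s2 by simp
    finally show ?thesis unfolding mm2_def using s
      by (simp add: power2_eq_square[symmetric] s2 field_simps)
  qed
  ultimately show ?thesis unfolding mm1_def[abs_def] by simp
qed

lemma mm1_pos: "d > 0 \<Longrightarrow> mm1 d a > 0"
proof -
  assume d: "d > 0"
  have s: "sqrt (a^2 + d) > \<bar>a\<bar>" by (rule sq_gt[OF d])
  have sp: "sqrt (a^2 + d) > 0" using s by linarith
  have "- sqrt (a^2 + d) < a" using s by linarith
  then have "a / sqrt (a^2 + d) > -1" using sp by (simp add: less_divide_eq)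
  then show ?thesis unfolding mm1_def by simp
qed

lemma mm2_pos: "d > 0 \<Longrightarrow> mm2 d a > 0"
  unfolding mm2_def by (simp add: add_nonneg_pos)

lemma mm_range:
  assumes c: "c > 0" and d: "d > 0" and a: "a < sqrt c"
  shows "mmf d a \<in> {0<..<MM c d}"
proof -
  have "mmf d a > 0" unfolding mmf_def using sq_gt[OF d, of a] by linarith
  moreover have "mmf d a < mmf d (sqrt c)"
  proof (rule DERIV_pos_imp_increasing[OF a])
    fix t show "\<exists>y. DERIV (mmf d) t :> y \<and> y > 0" using dmm[OF d, of t] mm1_pos[OF d, of t] by blast
  qed
  moreover have "mmf d (sqrt c) = MM c d" unfolding mmf_def MM_eq[OF c d] using c by simp
  ultimately show ?thesis by simp
qed

lemma sc_key:
  fixes f f1 f2 :: "real \<Rightarrow> real"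
  assumes h: "\<forall>a\<in>{..<b}. (f has_real_derivative f1 a) (at a) \<and> (f1 has_real_derivative f2 a) (at a) \<and> f2 a > 0"
    and xy: "x < y" "y < b" and u: "0 < u" "u < 1"
  shows "f ((1 - u) * x + u * y) < (1 - u) * f x + u * f y"
proof -
  define z where "z = (1 - u) * x + u * y"
  have zx: "z - x = u * (y - x)" and yz: "y - z = (1 - u) * (y - x)" unfolding z_def by algebra+
  have p1: "u * (y - x) > 0" using xy u by auto
  have p2: "(1 - u) * (y - x) > 0" using xy u by auto
  have xz1: "x < z" using zx p1 by linarith
  have xz2: "z < y" using yz p2 by linarith
  note xz = xz1 xz2
  have hb: "(f has_real_derivative f1 t) (at t) \<and> (f1 has_real_derivative f2 t) (at t) \<and> f2 t > 0" if "t < b" for t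
    using h that by simp
  have f1inc: "f1 p < f1 q" if "p < q" "q < b" for p q
  proof (rule DERIV_pos_imp_increasing[OF that(1)])
    fix t assume "p \<le> t" "t \<le> q"
    then have "t < b" using that by linarith
    then show "\<exists>y. DERIV f1 t :> y \<and> y > 0" using hb by blast
  qed
  have cont: "continuous_on {p..q} f" if "q < b" for p q
  proof (rule continuous_at_imp_continuous_on, rule ballI)
    fix t assume "t \<in> {p..q}"
    then have "t < b" using that by simp
    then show "isCont f t" using hb DERIV_isCont by blast
  qed
  have diff: "f differentiable (at t)" if "t < b" for t
    using hb[OF that] real_differentiable_def by blast
  have zb: "z < b" using xz2 xy by linarith
  have "\<exists>l p. x < p \<and> p < z \<and> DERIV f p :> l \<and> f z - f x = (z - x) * l"
  proof (rule MVT[OF xz1 cont[OF zb]])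
    fix t assume "x < t" "t < z" then show "f differentiable (at t)" using diff zb by simp
  qed
  then obtain l1 p where p: "x < p" "p < z" "DERIV f p :> l1" "f z - f x = (z - x) * l1" by blast
  have "\<exists>l p. z < p \<and> p < y \<and> DERIV f p :> l \<and> f y - f z = (y - z) * l"
  proof (rule MVT[OF xz2 cont[OF xy(2)]])
    fix t assume "z < t" "t < y" then show "f differentiable (at t)" using diff xy by simp
  qed
  then obtain l2 q where q: "z < q" "q < y" "DERIV f q :> l2" "f y - f z = (y - z) * l2" by blast
  have pb: "p < b" using p zb by simp
  have qb: "q < b" using q xy by simp
  have l1: "l1 = f1 p" using DERIV_unique[OF p(3)] hb[OF pb] by blast
  have l2: "l2 = f1 q" using DERIV_unique[OF q(3)] hb[OF qb] by blast
  have "l1 < l2" unfolding l1 l2 by (rule f1inc) (use p q qb in auto)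
  moreover have "(1 - u) * u * (y - x) > 0" using u xy by simp
  ultimately have "((1 - u) * u * (y - x)) * l1 < ((1 - u) * u * (y - x)) * l2"
    by (intro mult_strict_left_mono)
  then have "(1 - u) * (f z - f x) < u * (f y - f z)"
    unfolding p(4) q(4) zx yz by (simp add: algebra_simps)
  then show ?thesis unfolding z_def[symmetric] by (simp add: algebra_simps)
qed

lemma sc_lemma:
  fixes f f1 f2 :: "real \<Rightarrow> real"
  assumes h: "\<forall>a\<in>{..<b}. (f has_real_derivative f1 a) (at a) \<and> (f1 has_real_derivative f2 a) (at a) \<and> f2 a > 0"
  shows "strictly_convex_on {..<b} f"
  unfolding strictly_convex_on_def
proof (intro ballI impI allI)
  fix x y u :: real assume x: "x \<in> {..<b}" and y: "y \<in> {..<b}" and ne: "x \<noteq> y" and u: "0 < u \<and> u < 1"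
  show "f ((1 - u) * x + u * y) < (1 - u) * f x + u * f y"
  proof (cases "x < y")
    case True then show ?thesis using sc_key[OF h True] y u by auto
  next
    case False
    then have yx: "y < x" using ne by auto
    have "f ((1 - (1 - u)) * y + (1 - u) * x) < (1 - (1 - u)) * f y + (1 - u) * f x"
      by (rule sc_key[OF h yx]) (use x u in auto)
    then show ?thesis by (simp add: algebra_simps)
  qed
qed



theorem proposition4:
  fixes xA xB tA :: real
  assumes "0 < xB" and "xB < xA"
  defines "vE \<equiv> sqrt (2 / xA)"
  shows "(\<forall>vA<vE. \<exists>!T. kepler_direct_arc xA xB tA vA T)
    \<and> (\<forall>vA<vE. T_DR xA xB tA vA > 0)
    \<and> strictly_convex_on {..<vE} (T_DR xA xB tA)
    \<and> (\<exists>T1 T2 :: real \<Rightarrow> real. \<forall>vA<vE.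
          (T_DR xA xB tA has_real_derivative T1 vA) (at vA) \<and>
          (T1 has_real_derivative T2 vA) (at vA) \<and> T2 vA > 0)"
proof -
  define c where "c = 2 / xA"
  define d where "d = 2 / xB - 2 / xA"
  have xA0: "xA > 0" using assms by simp
  have c: "c > 0" unfolding c_def using xA0 by simp
  have "2 / xA < 2 / xB" using assms by (simp add: frac_less2)
  then have d: "d > 0" unfolding d_def by simp
  have eA: "2 / c = xA" unfolding c_def by simp
  have eB: "2 / (c + d) = xB" unfolding c_def d_def by simp
  have vE: "vE = sqrt c" unfolding vE_def c_def by simp
  have arc: "kepler_direct_arc xA xB tA a (HH c d (mmf d a))" if "a < vE" for a
    using arc_exists[OF c d, of a "mmf d a" tA] that unfolding vE eA eB mmf_def by simp
  have uniq: "\<exists>!T. kepler_direct_arc xA xB tA a T" if "a < vE" for a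
    using arc[OF that] arc_unique by blast
  have TDR: "T_DR xA xB tA a = HH c d (mmf d a)" if "a < vE" for a
    unfolding T_DR_def using arc[OF that] arc_unique by (blast intro: the_equality)
  have rng: "mmf d a \<in> {0<..<MM c d}" if "a < vE" for a
    using mm_range[OF c d] that vE by simp
  have pos: "T_DR xA xB tA a > 0" if "a < vE" for a
    unfolding TDR[OF that] using HH_pos[OF c d rng[OF that]] .
  define I1 where "I1 m = integral {0..1} (g1 c d m)" for m
  define I2 where "I2 m = integral {0..1} (g2 c d m)" for m
  define T1 where "T1 a = I1 (mmf d a) * mm1 d a" for a
  define T2 where "T2 a = I2 (mmf d a) * mm1 d a * mm1 d a + I1 (mmf d a) * mm2 d a" for a
  have der: "(T_DR xA xB tA has_real_derivative T1 a) (at a) \<and>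
          (T1 has_real_derivative T2 a) (at a) \<and> T2 a > 0" if a: "a < vE" for a
  proof (intro conjI)
    have "((\<lambda>a. HH c d (mmf d a)) has_real_derivative I1 (mmf d a) * mm1 d a) (at a)"
      unfolding I1_def using DERIV_chain2[OF HH_deriv[OF c d rng[OF a]] dmm[OF d]] .
    then show "(T_DR xA xB tA has_real_derivative T1 a) (at a)"
      unfolding T1_def
      by (rule has_field_derivative_transform_within_open[where S="{..<vE}"]) (use a TDR in auto)
    have dI: "((\<lambda>a. I1 (mmf d a)) has_real_derivative I2 (mmf d a) * mm1 d a) (at a)"
      unfolding I1_def I2_def using DERIV_chain2[OF H1_deriv[OF c d rng[OF a]] dmm[OF d]] .
    show "(T1 has_real_derivative T2 a) (at a)"
      unfolding T1_def[abs_def] T2_def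
      by (rule DERIV_cong[OF DERIV_mult[OF dI dmm1[OF d]]]) (simp add: algebra_simps)
    have "I2 (mmf d a) \<ge> 0" unfolding I2_def by (rule H2_nonneg[OF c d rng[OF a]])
    then have "I2 (mmf d a) * mm1 d a * mm1 d a \<ge> 0" using mm1_pos[OF d, of a] by simp
    moreover have "I1 (mmf d a) * mm2 d a > 0"
      unfolding I1_def using H1_pos[OF c d rng[OF a]] mm2_pos[OF d, of a] by simp
    ultimately show "T2 a > 0" unfolding T2_def by linarith
  qed
  have conv: "strictly_convex_on {..<vE} (T_DR xA xB tA)"
    by (rule sc_lemma[of vE _ T1 T2]) (use der in simp)
  show ?thesis using uniq pos conv der by blast
qed


end
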